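(* Let $\Sigma=(X,U,F)$ be a system, $Q\subset X$ a controlled invariant set, and $V\subset U$ a finite cover of $Q$. Assume in addition: (C.1) $Q_a\cap Q_b=\emptyset$ for all distinct $a,b\in V$; (C.2) for all $a,b\in V$ with $M_{ab}=1$ there exists $K\subset Q_a$ such that $Q_b\subset F(K,a)$; (C.3) $Q_c=\emptyset$ for every $c\in U\setminus V$. Then $h_{inv}(Q)=\log\rho(M_{Q,V})$, where $\rho$ denotes the spectral radius and $M_{Q,V}=(M_{ab})$.
   Context: A system is a triple $\Sigma=(X,U,F)$ where $X,U$ are nonempty sets and $F:X\times U\rightrightarrows X$ is a set-valued map with $F(x,u)\neq\emptyset$ for all $(x,u)$; for $A\subset X$, $F(A,u)=\bigcup_{x\in A}F(x,u)$. $Q\subset X$ is controlled invariant if for every $x\in Q$ there is $u\in U$ with $F(x,u)\subset Q$. For $u\in U$ put $Q_u=\{x\in Q:F(x,u)\subset Q\}$. Elements of $U^n$ are written $\omega=\omega_0\cdots\omega_{n-1}$, $\omega_{[0,i]}=\omega_0\cdots\omega_i$. A set $S\subset U^n$ is an admissible family of length $n$ for $Q$ if (a) $\omega'_0=\omega''_0$ for all $\omega',\omega''\in S$, and (b) there exists $x\in Q$ such that for every $\omega\in S$, with $I^0_\omega(x)=\{x\}$: for all $i=0,\dots,n-2$, $F(I^i_\omega(x),\omega_i)\subset\bigcup_{\omega'\in S,\ \omega'_{[0,i]}=\omega_{[0,i]}}Q_{\omega'_{i+1}}$ and $I^{i+1}_\omega(x):=F(I^i_\omega(x),\omega_i)\cap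 Q_{\omega_{i+1}}\neq\emptyset$; and $I^n_\omega(x):=F(I^{n-1}_\omega(x),\omega_{n-1})\subset Q$. Let $AF^n(Q)$ be the set of such families and $Q_S$ the set of $x\in Q$ satisfying (b). A set $\mathscr{S}\subset U^n$ is $(n,Q)$-spanning if $Q\subset\bigcup_{S\subset\mathscr{S},\,S\in AF^n(Q)}Q_S$; $r_{inv}(n,Q)$ is the infimum of $\sharp\mathscr{S}$ over such sets, and $h_{inv}(Q)=\limsup_{n\to\infty}\frac1n\log r_{inv}(n,Q)$ ($\log$ base $2$). A set $V\subset U$ is a cover of $Q$ if $Q\subset\bigcup_{a\in V}Q_a$. The admissible matrix $M_{Q,V}=(M_{ab})_{a,b\in V}$ has $M_{ab}=1$ if there exists $x\in Q_a$ with $F(x,a)\cap Q_b\neq\emptyset$, and $M_{ab}=0$ otherwise. *)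

theory Defs
  imports "Jordan_Normal_Form.Spectral_Radius" "HOL-Library.Extended_Real" "HOL-Library.Liminf_Limsup"
begin

definition is_system :: "'x set \<Rightarrow> 'u set \<Rightarrow> ('x \<Rightarrow> 'u \<Rightarrow> 'x set) \<Rightarrow> bool" where
  "is_system X U F \<longleftrightarrow> X \<noteq> {} \<and> U \<noteq> {} \<and>
     (\<forall>x\<in>X. \<forall>u\<in>U. F x u \<noteq> {} \<and> F x u \<subseteq> X)"

definition Img :: "('x \<Rightarrow> 'u \<Rightarrow> 'x set) \<Rightarrow> 'x set \<Rightarrow> 'u \<Rightarrow> 'x set" where
  "Img F A u = (\<Union>x\<in>A. F x u)"

definition controlled_invariant :: "'x set \<Rightarrow> 'u set \<Rightarrow> ('x \<Rightarrow> 'u \<Rightarrow> 'x set) \<Rightarrow> 'x set \<Rightarrow> bool" where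
  "controlled_invariant X U F Q \<longleftrightarrow> Q \<subseteq> X \<and> (\<forall>x\<in>Q. \<exists>u\<in>U. F x u \<subseteq> Q)"

definition Qsub :: "('x \<Rightarrow> 'u \<Rightarrow> 'x set) \<Rightarrow> 'x set \<Rightarrow> 'u \<Rightarrow> 'x set" where
  "Qsub F Q u = {x \<in> Q. F x u \<subseteq> Q}"

definition words :: "'u set \<Rightarrow> nat \<Rightarrow> 'u list set" where
  "words U n = {w. length w = n \<and> set w \<subseteq> U}"

fun Iset :: "('x \<Rightarrow> 'u \<Rightarrow> 'x set) \<Rightarrow> 'x set \<Rightarrow> 'u list \<Rightarrow> 'x \<Rightarrow> nat \<Rightarrow> 'x set" where
  "Iset F Q w x 0 = {x}"
| "Iset F Q w x (Suc i) =
     (if Suc i < length w then Img F (Iset F Q w x i) (w ! i) \<inter> Qsub F Q (w ! Suc i)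
      else Img F (Iset F Q w x i) (w ! i))"

definition adm_point :: "('x \<Rightarrow> 'u \<Rightarrow> 'x set) \<Rightarrow> 'x set \<Rightarrow> nat \<Rightarrow> 'u list set \<Rightarrow> 'x \<Rightarrow> bool" where
  "adm_point F Q n S x \<longleftrightarrow> x \<in> Q \<and>
     (\<forall>w\<in>S.
        (\<forall>i. i + 2 \<le> n \<longrightarrow>
           Img F (Iset F Q w x i) (w ! i)
             \<subseteq> (\<Union>w'\<in>{w' \<in> S. take (Suc i) w' = take (Suc i) w}. Qsub F Q (w' ! Suc i))
           \<and> Iset F Q w x (Suc i) \<noteq> {})
        \<and> Iset F Q w x n \<subseteq> Q)"

definition admissible_family :: "'u set \<Rightarrow> ('x \<Rightarrow> 'u \<Rightarrow> 'x set) \<Rightarrow> 'x set \<Rightarrow> nat \<Rightarrow> 'u list set \<Rightarrow> bool" where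
  "admissible_family U F Q n S \<longleftrightarrow> S \<noteq> {} \<and> S \<subseteq> words U n \<and>
     (\<forall>w'\<in>S. \<forall>w''\<in>S. w' ! 0 = w'' ! 0) \<and> (\<exists>x. adm_point F Q n S x)"

definition QS :: "('x \<Rightarrow> 'u \<Rightarrow> 'x set) \<Rightarrow> 'x set \<Rightarrow> nat \<Rightarrow> 'u list set \<Rightarrow> 'x set" where
  "QS F Q n S = {x. adm_point F Q n S x}"

definition spanning :: "'u set \<Rightarrow> ('x \<Rightarrow> 'u \<Rightarrow> 'x set) \<Rightarrow> 'x set \<Rightarrow> nat \<Rightarrow> 'u list set \<Rightarrow> bool" where
  "spanning U F Q n L \<longleftrightarrow> L \<subseteq> words U n \<and>
     Q \<subseteq> (\<Union>S\<in>{S. S \<subseteq> L \<and> admissible_family U F Q n S}. QS F Q n S)"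

definition r_inv :: "'u set \<Rightarrow> ('x \<Rightarrow> 'u \<Rightarrow> 'x set) \<Rightarrow> 'x set \<Rightarrow> nat \<Rightarrow> enat" where
  "r_inv U F Q n = Inf ((\<lambda>L. if finite L then enat (card L) else \<infinity>) ` {L. spanning U F Q n L})"

definition elog2 :: "real \<Rightarrow> ereal" where
  "elog2 r = (if r \<le> 0 then -\<infinity> else ereal (log 2 r))"

definition elog2_enat :: "enat \<Rightarrow> ereal" where
  "elog2_enat k = (case k of enat m \<Rightarrow> elog2 (real m) | \<infinity> \<Rightarrow> \<infinity>)"

definition h_inv :: "'u set \<Rightarrow> ('x \<Rightarrow> 'u \<Rightarrow> 'x set) \<Rightarrow> 'x set \<Rightarrow> ereal" where
  "h_inv U F Q = limsup (\<lambda>n. elog2_enat (r_inv U F Q n) / ereal (real n))"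

definition cover :: "('x \<Rightarrow> 'u \<Rightarrow> 'x set) \<Rightarrow> 'x set \<Rightarrow> 'u set \<Rightarrow> bool" where
  "cover F Q V \<longleftrightarrow> Q \<subseteq> (\<Union>a\<in>V. Qsub F Q a)"

definition adm_entry :: "('x \<Rightarrow> 'u \<Rightarrow> 'x set) \<Rightarrow> 'x set \<Rightarrow> 'u \<Rightarrow> 'u \<Rightarrow> nat" where
  "adm_entry F Q a b = (if \<exists>x\<in>Qsub F Q a. F x a \<inter> Qsub F Q b \<noteq> {} then 1 else 0)"

text \<open>The admissible matrix as a complex (card V x card V) matrix, rows/columns indexed
  through an (arbitrary) enumeration of V; the spectral radius does not depend on it.\<close>
definition adm_matrix :: "('x \<Rightarrow> 'u \<Rightarrow> 'x set) \<Rightarrow> 'x set \<Rightarrow> 'u set \<Rightarrow> complex mat" where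
  "adm_matrix F Q V =
     (let e = (SOME e. bij_betw e {0..<card V} V)
      in mat (card V) (card V) (\<lambda>(i, j). of_nat (adm_entry F Q (e i) (e j))))"

end

theory Submission
  imports Defs
begin

locale sett =
  fixes X :: "'x set" and U :: "'u set" and F :: "'x \<Rightarrow> 'u \<Rightarrow> 'x set"
    and Q :: "'x set" and V :: "'u set"
  assumes sys: "is_system X U F"
    and inv: "controlled_invariant X U F Q"
    and VU: "V \<subseteq> U" and finV: "finite V" and Vne: "V \<noteq> {}"
    and cov: "cover F Q V"
    and C1: "\<forall>a\<in>V. \<forall>b\<in>V. a \<noteq> b \<longrightarrow> Qsub F Q a \<inter> Qsub F Q b = {}"
    and C2: "\<forall>a\<in>V. \<forall>b\<in>V. adm_entry F Q a b = 1 \<longrightarrow>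
               (\<exists>K. K \<subseteq> Qsub F Q a \<and> Qsub F Q b \<subseteq> Img F K a)"
    and C3: "\<forall>c\<in>U - V. Qsub F Q c = {}"
begin

definition chain :: "'u list \<Rightarrow> bool" where
  "chain w \<longleftrightarrow> (\<forall>i. Suc i < length w \<longrightarrow> adm_entry F Q (w!i) (w!Suc i) = 1)"

definition W :: "nat \<Rightarrow> 'u list set" where
  "W n = {w \<in> words U n. chain w}"

definition traj :: "'u list \<Rightarrow> 'x list \<Rightarrow> bool" where
  "traj w ys \<longleftrightarrow> length ys = length w \<and> (\<forall>j<length w. ys!j \<in> Qsub F Q (w!j))
     \<and> (\<forall>j. Suc j < length w \<longrightarrow> ys!Suc j \<in> F (ys!j) (w!j))"

lemma QX: "Q \<subseteq> X" using inv unfolding controlled_invariant_def by auto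

lemma Fne: "x \<in> Q \<Longrightarrow> a \<in> U \<Longrightarrow> F x a \<noteq> {}"
  using sys QX unfolding is_system_def by auto

lemma Qsub_sub: "Qsub F Q a \<subseteq> Q" unfolding Qsub_def by auto

lemma Qsub_V: "a \<in> U \<Longrightarrow> y \<in> Qsub F Q a \<Longrightarrow> a \<in> V"
  using C3 by auto

lemma uniq: "a \<in> U \<Longrightarrow> b \<in> U \<Longrightarrow> y \<in> Qsub F Q a \<Longrightarrow> y \<in> Qsub F Q b \<Longrightarrow> a = b"
  using C1 Qsub_V by blast

lemma entry1: "adm_entry F Q a b = 1 \<Longrightarrow> \<exists>x\<in>Qsub F Q a. \<exists>y\<in>Qsub F Q b. y \<in> F x a"
  unfolding adm_entry_def by (auto split: if_splits)

lemma Iset_cong: "length w = length w' \<Longrightarrow> (\<forall>j\<le>i. w!j = w'!j) \<Longrightarrow> Iset F Q w x i = Iset F Q w' x i"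
proof (induction i)
  case 0 then show ?case by simp
next
  case (Suc i)
  then show ?case by simp
qed

lemma traj_Iset: assumes "traj w ys" "length w = n" "n > 0" "ys!0 = x"
  shows "j < n \<Longrightarrow> ys!j \<in> Iset F Q w x j"
proof (induction j)
  case 0 then show ?case using assms by simp
next
  case (Suc j)
  then have "ys!j \<in> Iset F Q w x j" by simp
  moreover have "ys!Suc j \<in> F (ys!j) (w!j)" "ys!Suc j \<in> Qsub F Q (w!Suc j)"
    using assms Suc.prems unfolding traj_def by auto
  ultimately show ?case using Suc.prems assms by (auto simp: Img_def)
qed

lemma ext: "y \<in> Q \<Longrightarrow> \<exists>u ys. length u = m \<and> set u \<subseteq> V \<and> traj u ys \<and> (m > 0 \<longrightarrow> ys!0 = y)"
proof (induction m arbitrary: y)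
  case 0 then show ?case by (auto simp: traj_def)
next
  case (Suc m)
  from Suc.prems cov obtain a where a: "a \<in> V" "y \<in> Qsub F Q a" unfolding cover_def by auto
  with Fne Suc.prems VU obtain z where z: "z \<in> F y a" by blast
  with a have zQ: "z \<in> Q" unfolding Qsub_def by auto
  from Suc.IH[OF zQ] obtain u ys where u: "length u = m" "set u \<subseteq> V" "traj u ys" "m > 0 \<longrightarrow> ys!0 = z"
    by blast
  have "traj (a#u) (y#ys)" using u a z unfolding traj_def
    apply (auto simp: nth_Cons split: nat.splits)
    done
  then show ?case using u a by (intro exI[of _ "a#u"] exI[of _ "y#ys"]) auto
qed

lemma back_traj: "w \<noteq> [] \<Longrightarrow> chain w \<Longrightarrow> set w \<subseteq> V \<Longrightarrow> Qsub F Q (last w) \<noteq> {} \<Longrightarrow> \<exists>ys. traj w ys"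
proof (induction w)
  case Nil then show ?case by simp
next
  case (Cons a w')
  show ?case
  proof (cases "w' = []")
    case True
    with Cons.prems obtain y where "y \<in> Qsub F Q a" by auto
    then show ?thesis using True by (intro exI[of _ "[y]"]) (auto simp: traj_def)
  next
    case False
    have ch: "chain w'" using Cons.prems(2) unfolding chain_def by fastforce
    from Cons.IH[OF False ch] Cons.prems False obtain ys where ys: "traj w' ys" by auto
    have e: "adm_entry F Q a (w'!0) = 1" using Cons.prems(2) False unfolding chain_def by fastforce
    have aV: "a \<in> V" "w'!0 \<in> V" using Cons.prems(3) False by auto
    from C2 aV e obtain K where K: "K \<subseteq> Qsub F Q a" "Qsub F Q (w'!0) \<subseteq> Img F K a" by blast
    have "ys!0 \<in> Qsub F Q (w'!0)" using ys False unfolding traj_def by auto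
    with K obtain y where y: "y \<in> K" "ys!0 \<in> F y a" unfolding Img_def by blast
    have "traj (a#w') (y#ys)" using ys y K unfolding traj_def
      by (auto simp: nth_Cons split: nat.splits)
    then show ?thesis by blast
  qed
qed

lemma chain_V: assumes "chain w" "set w \<subseteq> U" "length w \<ge> 2" shows "set w \<subseteq> V"
proof
  fix a assume "a \<in> set w"
  then obtain j where j: "j < length w" "w!j = a" by (auto simp: in_set_conv_nth)
  show "a \<in> V"
  proof (cases "Suc j < length w")
    case True
    then have "adm_entry F Q (w!j) (w!Suc j) = 1" using assms unfolding chain_def by auto
    then obtain y where "y \<in> Qsub F Q a" using j entry1 by blast
    then show ?thesis using Qsub_V assms j by (meson nth_mem subsetD)
  next
    case False
    then have jj: "j = Suc (j - 1)" using j assms by auto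
    have "adm_entry F Q (w!(j-1)) (w!Suc (j-1)) = 1" using assms j unfolding chain_def
      by (metis jj)
    then obtain y where "y \<in> Qsub F Q a" using j entry1 jj by metis
    then show ?thesis using Qsub_V assms j by (meson nth_mem subsetD)
  qed
qed

lemma W_V: "n \<ge> 2 \<Longrightarrow> W n \<subseteq> words V n"
  using chain_V unfolding W_def words_def by auto

lemma finite_words: "finite A \<Longrightarrow> finite (words A n)"
  unfolding words_def using finite_lists_length_eq[of A n] by (simp add: conj_commute)

lemma finite_W: "n \<ge> 2 \<Longrightarrow> finite (W n)"
  using W_V finite_words finV finite_subset by blast


lemma lower: assumes n: "n \<ge> 2" and sp: "spanning U F Q n L" and w: "w \<in> W n"
  shows "w \<in> L"
proof -
  have wU: "w \<in> words U n" and ch: "chain w" using w unfolding W_def by auto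
  have lw: "length w = n" using wU unfolding words_def by auto
  have wV: "set w \<subseteq> V" using chain_V ch wU n unfolding words_def by auto
  have wne: "w \<noteq> []" using lw n by auto
  obtain m where m: "n = Suc (Suc m)" using n by (metis add_2_eq_Suc le_iff_add)
  have "adm_entry F Q (w!m) (w!Suc m) = 1" using ch lw m unfolding chain_def by auto
  then obtain y where "y \<in> Qsub F Q (w!Suc m)" using entry1 by blast
  moreover have "last w = w!Suc m" using wne lw m by (simp add: last_conv_nth)
  ultimately have "Qsub F Q (last w) \<noteq> {}" by auto
  from back_traj[OF wne ch wV this] obtain ys where ys: "traj w ys" by blast
  define x where "x = ys!0"
  have xQ: "x \<in> Qsub F Q (w!0)" using ys n lw unfolding traj_def x_def by auto
  then have "x \<in> Q" using Qsub_sub by auto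
  with sp obtain S where S: "S \<subseteq> L" "admissible_family U F Q n S" "adm_point F Q n S x"
    unfolding spanning_def QS_def by blast
  have SW: "S \<subseteq> words U n" and Sne: "S \<noteq> {}" using S unfolding admissible_family_def by auto
  have ap: "\<And>w' i. w' \<in> S \<Longrightarrow> i + 2 \<le> n \<Longrightarrow> Img F (Iset F Q w' x i) (w' ! i)
             \<subseteq> (\<Union>w''\<in>{w'' \<in> S. take (Suc i) w'' = take (Suc i) w'}. Qsub F Q (w'' ! Suc i))"
    using S(3) unfolding adm_point_def by blast
  have len: "\<And>w'. w' \<in> S \<Longrightarrow> length w' = n" using SW unfolding words_def by auto
  have letU: "w'!j \<in> U" if "w' \<in> S" "j < n" for w' j
  proof -
    have "length w' = n" "set w' \<subseteq> U" using SW that unfolding words_def by auto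
    then show ?thesis using that nth_mem by blast
  qed
  have wlU: "\<And>j. j < n \<Longrightarrow> w!j \<in> U" using wV VU lw by (meson nth_mem subsetD)
  have claim: "i < n \<Longrightarrow> \<exists>w'\<in>S. (\<forall>j\<le>i. w'!j = w!j) \<and> ys!i \<in> Iset F Q w' x i" for i
  proof (induction i)
    case 0
    from Sne obtain w' where w': "w' \<in> S" by auto
    have "Img F (Iset F Q w' x 0) (w' ! 0) \<subseteq> Q" using ap[OF w', of 0] n Qsub_sub by fastforce
    then have "F x (w'!0) \<subseteq> Q" by (simp add: Img_def)
    then have "x \<in> Qsub F Q (w'!0)" using \<open>x \<in> Q\<close> unfolding Qsub_def by auto
    then have "w'!0 = w!0" using uniq letU[OF w'] wlU xQ n by auto
    then show ?case using w' x_def by auto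
  next
    case (Suc i)
    then obtain w' where w': "w' \<in> S" "\<forall>j\<le>i. w'!j = w!j" "ys!i \<in> Iset F Q w' x i" by auto
    have "ys!Suc i \<in> F (ys!i) (w!i)" using ys Suc.prems lw unfolding traj_def by auto
    then have "ys!Suc i \<in> Img F (Iset F Q w' x i) (w' ! i)" using w' unfolding Img_def by auto
    with ap[OF w'(1), of i] Suc.prems obtain w'' where w'': "w'' \<in> S" "take (Suc i) w'' = take (Suc i) w'"
      "ys!Suc i \<in> Qsub F Q (w''!Suc i)" by auto
    have eqs: "\<forall>j\<le>i. w''!j = w'!j"
    proof (intro allI impI)
      fix j assume j: "j \<le> i"
      have "take (Suc i) w'' ! j = take (Suc i) w' ! j" using w''(2) by simp
      then show "w''!j = w'!j" using j by simp
    qed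
    have "ys!Suc i \<in> Qsub F Q (w!Suc i)" using ys Suc.prems lw unfolding traj_def by auto
    then have e: "w''!Suc i = w!Suc i" using uniq letU[OF w''(1) Suc.prems] wlU[OF Suc.prems] w''(3) by auto
    have "Iset F Q w'' x i = Iset F Q w' x i" 
      by (rule Iset_cong) (use eqs len w' w'' in auto)
    moreover have "w''!i = w'!i" using eqs by simp
    ultimately have "Img F (Iset F Q w'' x i) (w''!i) = Img F (Iset F Q w' x i) (w' ! i)" by simp
    moreover have "Iset F Q w'' x (Suc i) = Img F (Iset F Q w'' x i) (w''!i) \<inter> Qsub F Q (w''!Suc i)"
      using Suc.prems len[OF w''(1)] by simp
    ultimately have "ys!Suc i \<in> Iset F Q w'' x (Suc i)" using w''(3) \<open>ys!Suc i \<in> Img F (Iset F Q w' x i) (w' ! i)\<close>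
      by simp
    moreover have "\<forall>j\<le>Suc i. w''!j = w!j" using eqs w'(2) e le_Suc_eq by auto
    ultimately show ?case using w''(1) by blast
  qed
  from claim[of "n-1"] n obtain w' where w': "w' \<in> S" "\<forall>j\<le>n-1. w'!j = w!j" by auto
  have "w' = w" using w' len lw by (intro nth_equalityI) auto
  then show ?thesis using w' S by auto
qed

lemma Iset_Qsub: "x \<in> Qsub F Q (w!0) \<Longrightarrow> i < length w \<Longrightarrow> Iset F Q w x i \<subseteq> Qsub F Q (w!i)"
  by (cases i) auto

lemma upper: assumes n: "n \<ge> 2" shows "spanning U F Q n (W n)"
  unfolding spanning_def
proof (rule conjI)
  show "W n \<subseteq> words U n" unfolding W_def by auto
  show "Q \<subseteq> (\<Union>S\<in>{S. S \<subseteq> W n \<and> admissible_family U F Q n S}. QS F Q n S)"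
  proof
  fix x assume xQ: "x \<in> Q"
  define S where "S = {w \<in> words U n. x \<in> Qsub F Q (w!0) \<and> (\<forall>i<n. Iset F Q w x i \<noteq> {})}"
  have len: "length w = n" if "w \<in> S" for w using that unfolding S_def words_def by auto
  have letU: "w!j \<in> U" if "w \<in> S" "j < n" for w j
  proof -
    have "length w = n" "set w \<subseteq> U" using that unfolding S_def words_def by auto
    then show ?thesis using that nth_mem by blast
  qed
  have x0: "x \<in> Qsub F Q (w!0)" if "w \<in> S" for w using that unfolding S_def by auto
  have SW: "S \<subseteq> W n"
  proof
    fix w assume w: "w \<in> S"
    have "chain w" unfolding chain_def
    proof (intro allI impI)
      fix i assume i: "Suc i < length w"
      have ne: "\<forall>i<n. Iset F Q w x i \<noteq> {}" using w unfolding S_def by auto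
      have "Iset F Q w x (Suc i) \<noteq> {}" using ne i len[OF w] by auto
      then obtain z where z: "z \<in> Img F (Iset F Q w x i) (w!i)" "z \<in> Qsub F Q (w!Suc i)"
        using i by auto
      then obtain y where y: "y \<in> Iset F Q w x i" "z \<in> F y (w!i)" unfolding Img_def by auto
      have "y \<in> Qsub F Q (w!i)" using Iset_Qsub[OF x0[OF w], of i] i y by auto
      then show "adm_entry F Q (w!i) (w!Suc i) = 1" using y z unfolding adm_entry_def by auto
    qed
    then show "w \<in> W n" using w unfolding S_def W_def by auto
  qed
  have Sne: "S \<noteq> {}"
  proof -
    obtain u ys where u: "length u = n" "set u \<subseteq> V" "traj u ys" "n > 0 \<longrightarrow> ys!0 = x"
      using ext[OF xQ] by blast
    have "\<forall>i<n. ys!i \<in> Iset F Q u x i" using traj_Iset[OF u(3) u(1)] u(4) n by auto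
    moreover have "x \<in> Qsub F Q (u!0)"
    proof -
      have l0: "0 < length u" using u n by auto
      have "\<forall>j<length u. ys!j \<in> Qsub F Q (u!j)" using u(3) unfolding traj_def by blast
      then have "ys!0 \<in> Qsub F Q (u!0)" using l0 by blast
      then show ?thesis using u n by auto
    qed
    ultimately have "u \<in> S" using u VU unfolding S_def words_def by auto
    then show ?thesis by auto
  qed
  have first: "\<forall>w'\<in>S. \<forall>w''\<in>S. w' ! 0 = w'' ! 0"
  proof (intro ballI)
    fix w' w'' assume a: "w' \<in> S" "w'' \<in> S"
    have "0 < n" using n by simp
    then show "w' ! 0 = w'' ! 0" using uniq[OF letU[OF a(1)] letU[OF a(2)] x0[OF a(1)] x0[OF a(2)]] by blast
  qed
  have "adm_point F Q n S x" unfolding adm_point_def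
  proof (intro conjI ballI allI impI)
    show "x \<in> Q" by fact
    fix w assume w: "w \<in> S"
    show "Iset F Q w x n \<subseteq> Q"
    proof -
      obtain m where m: "n = Suc m" using n by (cases n) auto
      have "Iset F Q w x n = Img F (Iset F Q w x m) (w!m)" using m len[OF w] by simp
      moreover have "Iset F Q w x m \<subseteq> Qsub F Q (w!m)" using Iset_Qsub[OF x0[OF w]] len[OF w] m by auto
      ultimately show ?thesis unfolding Img_def Qsub_def by auto
    qed
    fix i assume i: "i + 2 \<le> n"
    show "Iset F Q w x (Suc i) \<noteq> {}"
    proof -
      have ne: "\<forall>i<n. Iset F Q w x i \<noteq> {}" using w unfolding S_def by auto
      have "Suc i < n" using i by simp
      then show ?thesis using ne by blast
    qed
    show "Img F (Iset F Q w x i) (w ! i)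
             \<subseteq> (\<Union>w''\<in>{w'' \<in> S. take (Suc i) w'' = take (Suc i) w}. Qsub F Q (w'' ! Suc i))"
    proof
      fix z assume z: "z \<in> Img F (Iset F Q w x i) (w ! i)"
      then obtain y where y: "y \<in> Iset F Q w x i" "z \<in> F y (w!i)" unfolding Img_def by auto
      have "y \<in> Qsub F Q (w!i)" using Iset_Qsub[OF x0[OF w], of i] i y len[OF w] by auto
      then have zQ: "z \<in> Q" using y unfolding Qsub_def by auto
      obtain u ys where u: "length u = n - Suc i" "set u \<subseteq> V" "traj u ys" "n - Suc i > 0 \<longrightarrow> ys!0 = z"
        using ext[OF zQ] by blast
      define w'' where "w'' = take (Suc i) w @ u"
      have lw'': "length w'' = n" using u len[OF w] i unfolding w''_def by auto
      have pre: "\<forall>j\<le>i. w''!j = w!j" unfolding w''_def using len[OF w] i by (auto simp: nth_append)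
      have post: "w''!(Suc i + j) = u!j" for j unfolding w''_def using len[OF w] i by (auto simp: nth_append)
      have tk: "take (Suc i) w'' = take (Suc i) w" unfolding w''_def using len[OF w] i by auto
      have Ipre: "Iset F Q w'' x k = Iset F Q w x k" if "k \<le> i" for k
        by (rule Iset_cong) (use pre that lw'' len[OF w] in auto)
      have Ipost: "ys!j \<in> Iset F Q w'' x (Suc i + j)" if "Suc i + j < n" for j
        using that
      proof (induction j)
        case 0
        have "Iset F Q w'' x (Suc i) = Img F (Iset F Q w'' x i) (w''!i) \<inter> Qsub F Q (w''!Suc i)"
          using lw'' 0 by simp
        moreover have "Img F (Iset F Q w'' x i) (w''!i) = Img F (Iset F Q w x i) (w!i)"
          using Ipre pre by simp
        moreover have "ys!0 = z" using u 0 by auto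
        moreover have "z \<in> Qsub F Q (w''!Suc i)"
        proof -
          have l0: "0 < length u" using u 0 by auto
          have "\<forall>j<length u. ys!j \<in> Qsub F Q (u!j)" using u(3) unfolding traj_def by blast
          then have "ys!0 \<in> Qsub F Q (u!0)" using l0 by blast
          then show ?thesis using post[of 0] \<open>ys!0 = z\<close> by simp
        qed
        ultimately show ?case using z by simp
      next
        case (Suc j)
        then have ih: "ys!j \<in> Iset F Q w'' x (Suc i + j)" by simp
        have "Iset F Q w'' x (Suc (Suc i + j)) = Img F (Iset F Q w'' x (Suc i + j)) (w''!(Suc i + j))
               \<inter> Qsub F Q (w''!Suc (Suc i + j))"
          using lw'' Suc.prems by simp
        moreover have "ys!Suc j \<in> F (ys!j) (u!j)" "ys!Suc j \<in> Qsub F Q (u!Suc j)"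
          using u Suc.prems unfolding traj_def by auto
        moreover have "w''!(Suc i + j) = u!j" "w''!Suc (Suc i + j) = u!Suc j"
          using post[of j] post[of "Suc j"] by auto
        ultimately show ?case using ih unfolding Img_def by auto
      qed
      have "w'' \<in> S" unfolding S_def
      proof (intro CollectI conjI allI impI)
        have "set w \<subseteq> U" using w unfolding S_def words_def by auto
        then have "set (take (Suc i) w) \<subseteq> U" by (meson order_trans set_take_subset)
        then show "w'' \<in> words U n" using lw'' u VU unfolding words_def w''_def by auto
        show "x \<in> Qsub F Q (w''!0)" using pre x0[OF w] by auto
        fix k assume k: "k < n"
        show "Iset F Q w'' x k \<noteq> {}"
        proof (cases "k \<le> i")
          case True
          have ne: "\<forall>i<n. Iset F Q w x i \<noteq> {}" using w unfolding S_def by auto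
          then show ?thesis using Ipre[OF True] k by simp
        next
          case False
          then obtain j where "k = Suc i + j" by (intro that[of "k - Suc i"]) simp
          then show ?thesis using Ipost[of j] k by auto
        qed
      qed
      moreover have "z \<in> Qsub F Q (w''!Suc i)"
      proof -
        have l0: "0 < length u" using u i by auto
        have "\<forall>j<length u. ys!j \<in> Qsub F Q (u!j)" using u(3) unfolding traj_def by blast
        then have "ys!0 \<in> Qsub F Q (u!0)" using l0 by blast
        moreover have "ys!0 = z" using u l0 by auto
        ultimately show ?thesis using post[of 0] by simp
      qed
      ultimately show "z \<in> (\<Union>w''\<in>{w'' \<in> S. take (Suc i) w'' = take (Suc i) w}. Qsub F Q (w'' ! Suc i))"
        using tk by auto
    qed
  qed
  moreover have "admissible_family U F Q n S"
    unfolding admissible_family_def using Sne SW first calculation unfolding W_def by blast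
  ultimately show "x \<in> (\<Union>S\<in>{S. S \<subseteq> W n \<and> admissible_family U F Q n S}. QS F Q n S)"
    using SW unfolding QS_def by blast
  qed
qed

lemma r_inv_eq: assumes n: "n \<ge> 2" shows "r_inv U F Q n = enat (card (W n))"
proof -
  let ?g = "\<lambda>L. if finite L then enat (card L) else \<infinity>"
  have "r_inv U F Q n \<le> enat (card (W n))"
    unfolding r_inv_def
  proof (rule Inf_lower)
    show "enat (card (W n)) \<in> ?g ` {L. spanning U F Q n L}"
      by (rule image_eqI[where x="W n"]) (use upper[OF n] finite_W[OF n] in auto)
  qed
  moreover have "enat (card (W n)) \<le> r_inv U F Q n"
    unfolding r_inv_def
  proof (rule Inf_greatest)
    fix k assume "k \<in> ?g ` {L. spanning U F Q n L}"
    then obtain L where L: "spanning U F Q n L" "k = ?g L" by auto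
    show "enat (card (W n)) \<le> k"
    proof (cases "finite L")
      case True
      have "W n \<subseteq> L" using lower[OF n L(1)] by auto
      then show ?thesis using L True by (simp add: card_mono)
    next
      case False then show ?thesis using L by simp
    qed
  qed
  ultimately show ?thesis by simp
qed

lemma Nats_sum: "(\<And>x. x \<in> S \<Longrightarrow> f x \<in> \<nat>) \<Longrightarrow> sum f S \<in> \<nat>"
  by (induction S rule: infinite_finite_induct) auto

definition N where "N = card V"
definition e where "e = (SOME e. bij_betw e {0..<N} V)"
definition A where "A = adm_matrix F Q V"

lemma bij_e: "bij_betw e {0..<N} V"
  unfolding e_def using someI_ex[OF ex_bij_betw_nat_finite[OF finV]] N_def by simp

lemma A_mat: "A = mat N N (\<lambda>(i, j). of_nat (adm_entry F Q (e i) (e j)))"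
  unfolding A_def adm_matrix_def Let_def e_def N_def by simp

lemma A_carrier: "A \<in> carrier_mat N N" unfolding A_mat by simp

lemma Npos: "N > 0" unfolding N_def using finV Vne by (simp add: card_gt_0_iff)

definition Pend where "Pend k c = {w \<in> W (Suc k). last w = c}"

lemma Pend0: "c \<in> U \<Longrightarrow> Pend 0 c = {[c]}"
proof
  assume c: "c \<in> U"
  show "Pend 0 c \<subseteq> {[c]}"
  proof
    fix w assume "w \<in> Pend 0 c"
    then have "length w = 1" "last w = c" unfolding Pend_def W_def words_def by auto
    then show "w \<in> {[c]}" by (cases w) auto
  qed
  show "{[c]} \<subseteq> Pend 0 c" using c unfolding Pend_def W_def words_def chain_def by auto
qed

lemma entry_V: "a \<in> U \<Longrightarrow> b \<in> U \<Longrightarrow> adm_entry F Q a b = 1 \<Longrightarrow> a \<in> V \<and> b \<in> V"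
  using entry1 Qsub_V by blast

lemma Pend_Suc: assumes c: "c \<in> V"
  shows "Pend (Suc k) c = (\<lambda>w. w @ [c]) ` (\<Union>b\<in>{b\<in>V. adm_entry F Q b c = 1}. Pend k b)"
proof
  show "Pend (Suc k) c \<subseteq> (\<lambda>w. w @ [c]) ` (\<Union>b\<in>{b\<in>V. adm_entry F Q b c = 1}. Pend k b)"
  proof
    fix w assume w: "w \<in> Pend (Suc k) c"
    then have lw: "length w = Suc (Suc k)" and sw: "set w \<subseteq> U" and ch: "chain w" and lc: "last w = c"
      unfolding Pend_def W_def words_def by auto
    define v where "v = butlast w"
    have wv: "w = v @ [c]" unfolding v_def using lw lc by (metis append_butlast_last_id list.size(3) nat.distinct(1))
    have lv: "length v = Suc k" using lw wv by simp
    have sv: "set v \<subseteq> U" using sw wv by simp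
    have chv: "chain v" unfolding chain_def
    proof (intro allI impI)
      fix i assume i: "Suc i < length v"
      have "adm_entry F Q (w!i) (w!Suc i) = 1" using ch i lv lw unfolding chain_def by simp
      then show "adm_entry F Q (v!i) (v!Suc i) = 1" using wv i by (simp add: nth_append)
    qed
    define b where "b = last v"
    have bk: "b = v!k" unfolding b_def using lv last_conv_nth[of v] by (cases v) auto
    have "adm_entry F Q (w!k) (w!Suc k) = 1" using ch lw unfolding chain_def by simp
    then have eb: "adm_entry F Q b c = 1" using wv bk lv by (simp add: nth_append)
    have bU: "b \<in> U" using sv lv bk by (metis lessI nth_mem subsetD)
    have "b \<in> V" using entry_V[OF bU _ eb] c VU by auto
    moreover have "v \<in> Pend k b" unfolding Pend_def W_def words_def using lv sv chv b_def by auto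
    ultimately show "w \<in> (\<lambda>w. w @ [c]) ` (\<Union>b\<in>{b\<in>V. adm_entry F Q b c = 1}. Pend k b)"
      using wv eb by blast
  qed
  show "(\<lambda>w. w @ [c]) ` (\<Union>b\<in>{b\<in>V. adm_entry F Q b c = 1}. Pend k b) \<subseteq> Pend (Suc k) c"
  proof
    fix w assume "w \<in> (\<lambda>w. w @ [c]) ` (\<Union>b\<in>{b\<in>V. adm_entry F Q b c = 1}. Pend k b)"
    then obtain v b where v: "w = v @ [c]" "b \<in> V" "adm_entry F Q b c = 1" "v \<in> Pend k b" by auto
    then have lv: "length v = Suc k" and sv: "set v \<subseteq> U" and chv: "chain v" and lb: "last v = b"
      unfolding Pend_def W_def words_def by auto
    have bk: "v!k = b" using lb lv last_conv_nth[of v] by (cases v) auto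
    have "chain w" unfolding chain_def
    proof (intro allI impI)
      fix i assume i: "Suc i < length w"
      show "adm_entry F Q (w!i) (w!Suc i) = 1"
      proof (cases "Suc i < length v")
        case True
        then show ?thesis using chv v(1) unfolding chain_def by (simp add: nth_append)
      next
        case False
        then have "i = k" using i v(1) lv by simp
        then show ?thesis using v bk lv by (simp add: nth_append)
      qed
    qed
    then show "w \<in> Pend (Suc k) c" unfolding Pend_def W_def words_def using v(1) lv sv c VU by auto
  qed
qed

lemma Pend_sub: "Pend k c \<subseteq> W (Suc k)" unfolding Pend_def by auto

lemma finite_Pend: "c \<in> V \<Longrightarrow> finite (Pend k c)"
proof (cases k)
  case 0
  assume "c \<in> V" then show ?thesis using Pend0 VU 0 by auto
next
  case (Suc m)
  then have "2 \<le> Suc k" by simp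
  then have "finite (W (Suc k))" by (rule finite_W)
  then show ?thesis using Pend_sub finite_subset by blast
qed

lemma card_Pend_Suc: assumes c: "c \<in> V"
  shows "card (Pend (Suc k) c) = (\<Sum>b\<in>V. card (Pend k b) * adm_entry F Q b c)"
proof -
  have inj: "inj_on (\<lambda>w. w @ [c]) X'" for X' by (auto simp: inj_on_def)
  have "card (Pend (Suc k) c) = card (\<Union>b\<in>{b\<in>V. adm_entry F Q b c = 1}. Pend k b)"
    unfolding Pend_Suc[OF c] using card_image[OF inj] by blast
  also have "\<dots> = (\<Sum>b\<in>{b\<in>V. adm_entry F Q b c = 1}. card (Pend k b))"
    by (rule card_UN_disjoint) (use finV finite_Pend in \<open>auto simp: Pend_def\<close>)
  also have "\<dots> = (\<Sum>b\<in>V. if adm_entry F Q b c = 1 then card (Pend k b) else 0)"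
    by (simp add: sum.inter_filter[OF finV])
  also have "\<dots> = (\<Sum>b\<in>V. card (Pend k b) * adm_entry F Q b c)"
    by (rule sum.cong) (auto simp: adm_entry_def)
  finally show ?thesis .
qed

lemma colsum: "j < N \<Longrightarrow> (\<Sum>i=0..<N. (A ^\<^sub>m k) $$ (i,j)) = of_nat (card (Pend k (e j)))"
proof (induction k arbitrary: j)
  case 0
  have ej: "e j \<in> U" using bij_e 0 VU by (auto simp: bij_betw_def)
  have "(\<Sum>i=0..<N. (A ^\<^sub>m 0) $$ (i,j)) = (\<Sum>i=0..<N. if i = j then 1 else 0)"
    using A_carrier 0 by (intro sum.cong) auto
  also have "\<dots> = 1" using 0 by simp
  finally show ?case using Pend0[OF ej] by simp
next
  case (Suc k l)
  have AkC: "A ^\<^sub>m k \<in> carrier_mat N N" using A_carrier by simp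
  have el: "e l \<in> V" using bij_e Suc.prems by (auto simp: bij_betw_def)
  have "(\<Sum>i=0..<N. (A ^\<^sub>m Suc k) $$ (i,l)) = (\<Sum>i=0..<N. \<Sum>j=0..<N. (A ^\<^sub>m k) $$ (i,j) * A $$ (j,l))"
    using AkC A_carrier Suc.prems
    by (intro sum.cong) (auto simp: index_mult_mat scalar_prod_def)
  also have "\<dots> = (\<Sum>j=0..<N. (\<Sum>i=0..<N. (A ^\<^sub>m k) $$ (i,j)) * A $$ (j,l))"
    by (subst sum.swap) (simp add: sum_distrib_right)
  also have "\<dots> = (\<Sum>j=0..<N. of_nat (card (Pend k (e j)) * adm_entry F Q (e j) (e l)))"
    using Suc.IH Suc.prems by (intro sum.cong) (auto simp: A_mat)
  also have "\<dots> = of_nat (\<Sum>j=0..<N. card (Pend k (e j)) * adm_entry F Q (e j) (e l))" by simp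
  also have "(\<Sum>j=0..<N. card (Pend k (e j)) * adm_entry F Q (e j) (e l)) = (\<Sum>b\<in>V. card (Pend k b) * adm_entry F Q b (e l))"
    using sum.reindex_bij_betw[OF bij_e, of "\<lambda>b. card (Pend k b) * adm_entry F Q b (e l)"] by simp
  also have "\<dots> = card (Pend (Suc k) (e l))" using card_Pend_Suc[OF el] by simp
  finally show ?case .
qed

lemma entries_Nats: "i < N \<Longrightarrow> j < N \<Longrightarrow> (A ^\<^sub>m k) $$ (i,j) \<in> \<nat>"
proof (induction k arbitrary: i j)
  case 0 then show ?case using A_carrier by auto
next
  case (Suc k)
  have AkC: "A ^\<^sub>m k \<in> carrier_mat N N" using A_carrier by simp
  have "(A ^\<^sub>m Suc k) $$ (i,j) = (\<Sum>l=0..<N. (A ^\<^sub>m k) $$ (i,l) * A $$ (l,j))"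
    using AkC A_carrier Suc.prems by (auto simp: index_mult_mat scalar_prod_def)
  also have "\<dots> \<in> \<nat>" using Suc by (intro Nats_sum) (auto simp: A_mat)
  finally show ?case .
qed

lemma card_W_sum: assumes k: "k \<ge> 1"
  shows "of_nat (card (W (Suc k))) = (\<Sum>l=0..<N. \<Sum>i=0..<N. (A ^\<^sub>m k) $$ (i,l))"
proof -
  have "W (Suc k) = (\<Union>c\<in>V. Pend k c)"
  proof
    show "W (Suc k) \<subseteq> (\<Union>c\<in>V. Pend k c)"
    proof
      fix w assume w: "w \<in> W (Suc k)"
      then have "set w \<subseteq> V" using W_V[of "Suc k"] k unfolding words_def by auto
      moreover have "w \<noteq> []" using w unfolding W_def words_def by auto
      ultimately have "last w \<in> V" by auto
      then show "w \<in> (\<Union>c\<in>V. Pend k c)" using w unfolding Pend_def by auto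
    qed
    show "(\<Union>c\<in>V. Pend k c) \<subseteq> W (Suc k)" using Pend_sub by auto
  qed
  moreover have "card (\<Union>c\<in>V. Pend k c) = (\<Sum>c\<in>V. card (Pend k c))"
    by (rule card_UN_disjoint) (use finV finite_Pend in \<open>auto simp: Pend_def\<close>)
  ultimately have "card (W (Suc k)) = (\<Sum>c\<in>V. card (Pend k c))" by simp
  also have "\<dots> = (\<Sum>l=0..<N. card (Pend k (e l)))"
    using sum.reindex_bij_betw[OF bij_e, of "\<lambda>c. card (Pend k c)"] by simp
  finally have "of_nat (card (W (Suc k))) = (\<Sum>l=0..<N. (of_nat (card (Pend k (e l))) :: complex))" by simp
  also have "\<dots> = (\<Sum>l=0..<N. \<Sum>i=0..<N. (A ^\<^sub>m k) $$ (i,l))"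
    using colsum by (intro sum.cong) auto
  finally show ?thesis .
qed

definition rho where "rho = spectral_radius A"

lemma norm_Nats: "(z::complex) \<in> \<nat> \<Longrightarrow> norm z = Re z"
  by (induction rule: Nats_induct) auto

lemma Re_card: "k \<ge> 1 \<Longrightarrow> real (card (W (Suc k))) = (\<Sum>l=0..<N. \<Sum>i=0..<N. norm ((A ^\<^sub>m k) $$ (i,l)))"
proof -
  assume k: "k \<ge> 1"
  have "real (card (W (Suc k))) = Re (of_nat (card (W (Suc k))))" by simp
  also have "\<dots> = Re (\<Sum>l=0..<N. \<Sum>i=0..<N. (A ^\<^sub>m k) $$ (i,l))" using card_W_sum[OF k] by simp
  also have "\<dots> = (\<Sum>l=0..<N. \<Sum>i=0..<N. Re ((A ^\<^sub>m k) $$ (i,l)))" by (simp add: Re_sum)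
  also have "\<dots> = (\<Sum>l=0..<N. \<Sum>i=0..<N. norm ((A ^\<^sub>m k) $$ (i,l)))"
    using norm_Nats entries_Nats by (intro sum.cong) auto
  finally show ?thesis .
qed

lemma rho_nonneg: "rho \<ge> 0"
proof -
  from spectral_radius_mem_max(1)[OF A_carrier Npos] show ?thesis unfolding rho_def by auto
qed

lemma lowerS: assumes k: "k \<ge> 1" shows "rho ^ k \<le> real (card (W (Suc k)))"
proof -
  from spectral_radius_mem_max(1)[OF A_carrier Npos] obtain lam where
    lam: "lam \<in> spectrum A" "rho = norm lam" unfolding rho_def by auto
  then obtain v where ev: "eigenvector A v lam" unfolding spectrum_def eigenvalue_def by auto
  have vC: "v \<in> carrier_vec N" and v0: "v \<noteq> 0\<^sub>v N" using ev A_carrier unfolding eigenvector_def by auto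
  have pw: "A ^\<^sub>m k *\<^sub>v v = lam ^ k \<cdot>\<^sub>v v" by (rule eigenvector_pow[OF A_carrier ev])
  define m where "m = Max ((\<lambda>i. norm (v $ i)) ` {0..<N})"
  have "m \<in> (\<lambda>i. norm (v $ i)) ` {0..<N}" unfolding m_def using Npos by (intro Max_in) auto
  then obtain i0 where i0: "i0 < N" "m = norm (v $ i0)" by auto
  have mge: "norm (v $ i) \<le> m" if "i < N" for i unfolding m_def using that by (intro Max_ge) auto
  have mpos: "m > 0"
  proof (rule ccontr)
    assume "\<not> m > 0"
    then have "\<And>i. i < N \<Longrightarrow> v $ i = 0" using mge by (meson norm_le_zero_iff order_trans not_less)
    then have "v = 0\<^sub>v N" using vC by (intro eq_vecI) auto
    then show False using v0 by simp
  qed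
  define X where "X = A ^\<^sub>m k"
  have XC: "X \<in> carrier_mat N N" unfolding X_def using A_carrier by simp
  have "(X *\<^sub>v v) $ i0 = (\<Sum>j=0..<N. X $$ (i0,j) * v $ j)"
    using XC vC i0 by (auto simp: scalar_prod_def)
  moreover have "(X *\<^sub>v v) $ i0 = lam ^ k * v $ i0" using pw vC i0 unfolding X_def by simp
  ultimately have eq: "(\<Sum>j=0..<N. X $$ (i0,j) * v $ j) = lam ^ k * v $ i0" by simp
  have "rho ^ k * m = norm (\<Sum>j=0..<N. X $$ (i0,j) * v $ j)"
    unfolding eq using lam i0 by (simp add: norm_mult norm_power)
  also have "\<dots> \<le> (\<Sum>j=0..<N. norm (X $$ (i0,j)) * norm (v $ j))"
    by (rule order_trans[OF norm_sum]) (simp add: norm_mult)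
  also have "\<dots> \<le> (\<Sum>j=0..<N. norm (X $$ (i0,j)) * m)"
    using mge by (intro sum_mono mult_left_mono) auto
  also have "\<dots> = m * (\<Sum>j=0..<N. norm (X $$ (i0,j)))" by (simp add: sum_distrib_left mult.commute)
  also have "\<dots> \<le> m * (\<Sum>j=0..<N. \<Sum>i=0..<N. norm (X $$ (i,j)))"
  proof -
    have "norm (X $$ (i0,j)) \<le> (\<Sum>i=0..<N. norm (X $$ (i,j)))" for j
      by (rule member_le_sum) (use i0 in auto)
    then show ?thesis using mpos by (intro mult_left_mono sum_mono) auto
  qed
  also have "\<dots> = m * real (card (W (Suc k)))" using Re_card[OF k] unfolding X_def by simp
  finally show ?thesis using mpos by simp
qed

lemma upperS: assumes t: "t > rho" shows "\<exists>C. \<forall>k\<ge>1. real (card (W (Suc k))) \<le> C * t ^ k"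
proof -
  have tpos: "t > 0" using t rho_nonneg by simp
  define B where "B = complex_of_real (1/t) \<cdot>\<^sub>m A"
  have BC: "B \<in> carrier_mat N N" unfolding B_def using A_carrier by simp
  have AB: "A $$ (i,j) = complex_of_real t * B $$ (i,j)" if "i < N" "j < N" for i j
    unfolding B_def using that A_carrier tpos by (simp add: field_simps)
  have "spectral_radius B < 1"
  proof -
    from spectral_radius_mem_max(1)[OF BC Npos] obtain mu where
      mu: "mu \<in> spectrum B" "spectral_radius B = norm mu" by auto
    then obtain v where ev: "eigenvector B v mu" unfolding spectrum_def eigenvalue_def by auto
    have vC: "v \<in> carrier_vec N" and v0: "v \<noteq> 0\<^sub>v N" and Bv: "B *\<^sub>v v = mu \<cdot>\<^sub>v v"
      using ev BC unfolding eigenvector_def by auto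
    have "A *\<^sub>v v = (complex_of_real t * mu) \<cdot>\<^sub>v v"
    proof (rule eq_vecI)
      show "dim_vec (A *\<^sub>v v) = dim_vec ((complex_of_real t * mu) \<cdot>\<^sub>v v)" using A_carrier vC by simp
      fix i assume "i < dim_vec ((complex_of_real t * mu) \<cdot>\<^sub>v v)"
      then have i: "i < N" using vC by simp
      have "(A *\<^sub>v v) $ i = (\<Sum>j=0..<N. A $$ (i,j) * v $ j)" using A_carrier vC i by (auto simp: scalar_prod_def)
      also have "\<dots> = complex_of_real t * (\<Sum>j=0..<N. B $$ (i,j) * v $ j)"
        using AB i by (simp add: sum_distrib_left mult.assoc)
      also have "(\<Sum>j=0..<N. B $$ (i,j) * v $ j) = (B *\<^sub>v v) $ i" using BC vC i by (auto simp: scalar_prod_def)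
      also have "\<dots> = mu * v $ i" using Bv vC i by simp
      finally show "(A *\<^sub>v v) $ i = ((complex_of_real t * mu) \<cdot>\<^sub>v v) $ i" using vC i by simp
    qed
    then have "eigenvector A v (complex_of_real t * mu)" using vC v0 A_carrier unfolding eigenvector_def by simp
    then have "complex_of_real t * mu \<in> spectrum A" unfolding spectrum_def eigenvalue_def by auto
    then have "norm (complex_of_real t * mu) \<le> rho" unfolding rho_def
      using spectral_radius_mem_max(2)[OF A_carrier Npos] by auto
    then have "t * norm mu \<le> rho" using tpos by (simp add: norm_mult)
    then have "t * norm mu < t" using t by simp
    then have "norm mu < 1" using tpos by simp
    then show ?thesis using mu by simp
  qed
  from spectral_radius_jnf_norm_bound_less_1_upper_triangular[OF BC this]
  obtain c where c: "\<And>k. norm_bound (B ^\<^sub>m k) c" by auto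
  have Bpow: "B ^\<^sub>m k = complex_of_real (1/t) ^ k \<cdot>\<^sub>m (A ^\<^sub>m k)" for k
  proof (induction k)
    case 0 then show ?case using A_carrier BC by (auto intro!: eq_matI)
  next
    case (Suc k)
    have "B ^\<^sub>m Suc k = (complex_of_real (1/t) ^ k \<cdot>\<^sub>m (A ^\<^sub>m k)) * (complex_of_real (1/t) \<cdot>\<^sub>m A)"
      using Suc unfolding B_def by simp
    also have "\<dots> = complex_of_real (1/t) ^ Suc k \<cdot>\<^sub>m (A ^\<^sub>m Suc k)"
      using A_carrier by (simp add: mult_smult_assoc_mat[of _ N N _ N] mult_smult_distrib[of _ N N _ N])
        (intro eq_matI, auto simp: field_simps)
    finally show ?case .
  qed
  have ent: "norm ((A ^\<^sub>m k) $$ (i,j)) \<le> c * t ^ k" if "i < N" "j < N" for i j k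
  proof -
    have "norm ((B ^\<^sub>m k) $$ (i,j)) \<le> c" using c[of k] that BC unfolding norm_bound_def by simp
    moreover have "(B ^\<^sub>m k) $$ (i,j) = complex_of_real (1/t) ^ k * (A ^\<^sub>m k) $$ (i,j)"
      using Bpow that A_carrier by simp
    moreover have "cmod (1 / complex_of_real t) = 1/t" using tpos by (simp add: norm_divide)
    ultimately have "(1/t) ^ k * norm ((A ^\<^sub>m k) $$ (i,j)) \<le> c" using tpos
      by (simp add: norm_mult norm_power)
    then show ?thesis using tpos by (simp add: field_simps)
  qed
  show ?thesis
  proof (intro exI allI impI)
    fix k :: nat assume k: "k \<ge> 1"
    have "real (card (W (Suc k))) = (\<Sum>l=0..<N. \<Sum>i=0..<N. norm ((A ^\<^sub>m k) $$ (i,l)))" by (rule Re_card[OF k])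
    also have "\<dots> \<le> (\<Sum>l=0..<N. \<Sum>i=0..<N. c * t ^ k)" using ent by (intro sum_mono) auto
    also have "\<dots> = (real N * real N * c) * t ^ k" by simp
    finally show "real (card (W (Suc k))) \<le> (real N * real N * c) * t ^ k" .
  qed
qed

lemma lim_aux: "(\<lambda>n. (a + (real n - 1) * L) / real n) \<longlonglongrightarrow> L"
proof -
  have "(\<lambda>n. (a - L) * (1 / real n) + L) \<longlonglongrightarrow> (a - L) * 0 + L"
    by (intro tendsto_intros lim_1_over_n)
  moreover have "eventually (\<lambda>n. (a - L) * (1 / real n) + L = (a + (real n - 1) * L) / real n) sequentially"
    using eventually_gt_at_top[of "0::nat"] by eventually_elim (simp add: field_simps)
  ultimately show ?thesis by (simp add: tendsto_cong)
qed

definition fseq where "fseq n = elog2_enat (r_inv U F Q n) / ereal (real n)"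

lemma fseq_eq: assumes n: "n \<ge> 2"
  shows "fseq n = (if card (W n) = 0 then -\<infinity> else ereal (log 2 (real (card (W n))) / real n))"
  using n unfolding fseq_def r_inv_eq[OF n] elog2_enat_def elog2_def by auto

lemma upper_t: assumes t: "t > rho" shows "limsup fseq \<le> ereal (log 2 t)"
proof -
  have tpos: "t > 0" using t rho_nonneg by simp
  from upperS[OF t] obtain C where C: "\<And>k. k \<ge> 1 \<Longrightarrow> real (card (W (Suc k))) \<le> C * t ^ k" by auto
  define C' where "C' = max C 1"
  have C'pos: "C' > 0" unfolding C'_def by simp
  define g where "g n = (log 2 C' + (real n - 1) * log 2 t) / real n" for n
  have "eventually (\<lambda>n. fseq n \<le> ereal (g n)) sequentially"
    using eventually_ge_at_top[of "2::nat"]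
  proof eventually_elim
    case (elim n)
    define k where "k = n - 1"
    have k: "k \<ge> 1" "n = Suc k" using elim unfolding k_def by auto
    show ?case
    proof (cases "card (W n) = 0")
      case True then show ?thesis using fseq_eq[OF elim] by simp
    next
      case False
      have "real (card (W n)) \<le> C' * t ^ k"
        using C[OF k(1)] k(2) tpos unfolding C'_def
        by (smt (verit, best) mult_right_mono zero_le_power)
      then have "log 2 (real (card (W n))) \<le> log 2 (C' * t ^ k)" using False by simp
      also have "\<dots> = log 2 C' + real k * log 2 t" using C'pos tpos by (simp add: log_mult log_nat_power)
      finally have "log 2 (real (card (W n))) / real n \<le> g n"
        unfolding g_def using k by (simp add: divide_right_mono)
      then show ?thesis using fseq_eq[OF elim] False by simp
    qed
  qed
  then have "limsup fseq \<le> limsup (\<lambda>n. ereal (g n))" by (rule Limsup_mono)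
  also have "limsup (\<lambda>n. ereal (g n)) = ereal (log 2 t)"
    by (rule lim_imp_Limsup) (use lim_aux[of "log 2 C'" "log 2 t"] in \<open>auto simp: g_def intro!: tendsto_ereal\<close>)
  finally show ?thesis .
qed

lemma lower_l: assumes r: "rho > 0" shows "ereal (log 2 rho) \<le> limsup fseq"
proof -
  define g where "g n = (0 + (real n - 1) * log 2 rho) / real n" for n
  have "eventually (\<lambda>n. ereal (g n) \<le> fseq n) sequentially"
    using eventually_ge_at_top[of "2::nat"]
  proof eventually_elim
    case (elim n)
    define k where "k = n - 1"
    have k: "k \<ge> 1" "n = Suc k" using elim unfolding k_def by auto
    have le: "rho ^ k \<le> real (card (W n))" using lowerS[OF k(1)] k by simp
    have pos: "rho ^ k > 0" using r by simp
    then have nz: "card (W n) \<noteq> 0" using le by auto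
    have "real k * log 2 rho = log 2 (rho ^ k)" using r by (simp add: log_nat_power)
    also have "\<dots> \<le> log 2 (real (card (W n)))" using le pos by simp
    finally have "g n \<le> log 2 (real (card (W n))) / real n"
      unfolding g_def using k by (simp add: divide_right_mono)
    then show ?case using fseq_eq[OF elim] nz by simp
  qed
  then have "limsup (\<lambda>n. ereal (g n)) \<le> limsup fseq" by (rule Limsup_mono)
  moreover have "limsup (\<lambda>n. ereal (g n)) = ereal (log 2 rho)"
    by (rule lim_imp_Limsup) (use lim_aux[of 0 "log 2 rho"] in \<open>auto simp: g_def intro!: tendsto_ereal\<close>)
  ultimately show ?thesis by simp
qed

lemma h_main: "h_inv U F Q = elog2 rho"
proof -
  have h: "h_inv U F Q = limsup fseq" unfolding h_inv_def fseq_def ..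
  show ?thesis
  proof (cases "rho > 0")
    case True
    have "limsup fseq \<le> ereal (log 2 rho)"
    proof (rule ereal_le_epsilon2)
      fix eps :: real assume eps: "eps > 0"
      have "rho < rho * 2 powr eps" using True eps by simp
      then have "limsup fseq \<le> ereal (log 2 (rho * 2 powr eps))" by (rule upper_t)
      also have "log 2 (rho * 2 powr eps) = log 2 rho + eps" using True by (simp add: log_mult)
      finally show "limsup fseq \<le> ereal (log 2 rho) + ereal eps" by simp
    qed
    then have "limsup fseq = ereal (log 2 rho)" using lower_l[OF True] by simp
    then show ?thesis using h True unfolding elog2_def by simp
  next
    case False
    then have r0: "rho = 0" using rho_nonneg by simp
    have "limsup fseq = -\<infinity>"
    proof (rule ereal_bot)
      fix B :: real
      have "rho < 2 powr B" using r0 by simp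
      then have "limsup fseq \<le> ereal (log 2 (2 powr B))" by (rule upper_t)
      then show "limsup fseq \<le> ereal B" by simp
    qed
    then show ?thesis using h r0 unfolding elog2_def by simp
  qed
qed

end

theorem theorem3p10:
  fixes X :: "'x set" and U :: "'u set" and F :: "'x \<Rightarrow> 'u \<Rightarrow> 'x set"
    and Q :: "'x set" and V :: "'u set"
  assumes sys: "is_system X U F"
    and inv: "controlled_invariant X U F Q"
    and VU: "V \<subseteq> U" and finV: "finite V" and Vne: "V \<noteq> {}"
    and cov: "cover F Q V"
    and C1: "\<forall>a\<in>V. \<forall>b\<in>V. a \<noteq> b \<longrightarrow> Qsub F Q a \<inter> Qsub F Q b = {}"
    and C2: "\<forall>a\<in>V. \<forall>b\<in>V. adm_entry F Q a b = 1 \<longrightarrow>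
               (\<exists>K. K \<subseteq> Qsub F Q a \<and> Qsub F Q b \<subseteq> Img F K a)"
    and C3: "\<forall>c\<in>U - V. Qsub F Q c = {}"
  shows "h_inv U F Q = elog2 (spectral_radius (adm_matrix F Q V))"
proof -
  interpret sett X U F Q V
    by (rule sett.intro) (fact sys inv VU finV Vne cov C1 C2 C3)+
  show ?thesis using h_main unfolding rho_def A_def .
qed

end
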